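(* The functor $\tau:\mathbf{GrpwTop}\to\mathbf{TopGrp}$ satisfies: (1) $\tau$ preserves finite products: for groups with topology $G,H$ (with $G\times H$ given the product topology), the identity $\tau(G\times H)\to\tau(G)\times\tau(H)$ is an isomorphism of topological groups. (2) If a homomorphism $f:G\to H$ of groups with topology is a topological quotient map, then $\tau(f):\tau(G)\to\tau(H)$ is a quotient map. (3) A group with topology $G$ is a topological group if and only if $G=\tau(G)$ (as topological spaces). (4) A group with topology $G$ is discrete if and only if $\tau(G)$ is discrete.
   Context: A group with topology is a group with an arbitrary topology; $\mathbf{GrpwTop}$ is the category of such with continuous homomorphisms, $\mathbf{TopGrp}$ the category of topological groups. $F_M(S)$ is the free (Markov) topological group on a space $S$. For $G$ a group with topology, $\tau(G)$ is $G$ with the quotient topology with respect to the multiplication epimorphism $m_G:F_M(G)\to G$ sending each generator $g$ to $g$; on morphisms $\tau$ is the identity on underlying homomorphisms. *)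

theory Defs
  imports "HOL-Analysis.Analysis" "HOL-Algebra.Algebra"
begin

text \<open>A letter is a pair (x, b): (x, True) stands for x, (x, False) for its formal inverse.\<close>

definition reduce :: "('a \<times> bool) list \<Rightarrow> ('a \<times> bool) list" where
  "reduce xs = foldr (\<lambda>x ys. case ys of [] \<Rightarrow> [x]
      | y # ys' \<Rightarrow> (if fst x = fst y \<and> snd x \<noteq> snd y then ys' else x # ys)) xs []"

definition free_group :: "'a set \<Rightarrow> ('a \<times> bool) list monoid" where
  "free_group S = \<lparr> carrier = {w. set w \<subseteq> S \<times> UNIV \<and> reduce w = w},
                    mult = (\<lambda>u v. reduce (u @ v)), one = [] \<rparr>"

definition free_gen :: "'a \<Rightarrow> ('a \<times> bool) list" where
  "free_gen x = [(x, True)]"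

definition group_with_topology :: "('a, 'm) monoid_scheme \<Rightarrow> 'a topology \<Rightarrow> bool" where
  "group_with_topology G T \<longleftrightarrow> group G \<and> topspace T = carrier G"

definition topological_group :: "('a, 'm) monoid_scheme \<Rightarrow> 'a topology \<Rightarrow> bool" where
  "topological_group G T \<longleftrightarrow> group_with_topology G T
     \<and> continuous_map (prod_topology T T) T (\<lambda>(x, y). mult G x y)
     \<and> continuous_map T T (m_inv G)"

text \<open>F_M(S): the free group on the points of S with the finest group topology making
  the insertion of generators continuous (supremum of all such group topologies).\<close>

definition FM_topology :: "'a topology \<Rightarrow> ('a \<times> bool) list topology" where
  "FM_topology Y = topology_generated_by
     {U. \<exists>T. topological_group (free_group (topspace Y)) T
               \<and> continuous_map Y T free_gen \<and> openin T U}"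

definition mult_map :: "('a, 'm) monoid_scheme \<Rightarrow> ('a \<times> bool) list \<Rightarrow> 'a" where
  "mult_map G w = foldr (\<lambda>(x, b) acc. mult G (if b then x else m_inv G x) acc) w (one G)"

definition tau :: "('a, 'm) monoid_scheme \<Rightarrow> 'a topology \<Rightarrow> 'a topology" where
  "tau G T = topology (\<lambda>U. U \<subseteq> carrier G \<and>
      openin (FM_topology T) {w \<in> topspace (FM_topology T). mult_map G w \<in> U})"

end

theory Submission
  imports Defs
begin


definition red_step :: "('a \<times> bool) \<Rightarrow> ('a \<times> bool) list \<Rightarrow> ('a \<times> bool) list" where
  "red_step x ys = (case ys of [] \<Rightarrow> [x]
      | y # ys' \<Rightarrow> (if fst x = fst y \<and> snd x \<noteq> snd y then ys' else x # ys))"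

lemma reduce_foldr: "reduce xs = foldr red_step xs []"
  unfolding reduce_def red_step_def[abs_def] by (rule refl)

fun reduced :: "('a \<times> bool) list \<Rightarrow> bool" where
  "reduced [] = True"
| "reduced [x] = True"
| "reduced (x # y # r) = (\<not> (fst x = fst y \<and> snd x \<noteq> snd y) \<and> reduced (y # r))"

lemma reduced_tl: "reduced (x # xs) \<Longrightarrow> reduced xs"
  by (cases xs) auto

lemma reduced_red_step: "reduced ys \<Longrightarrow> reduced (red_step x ys)"
proof (cases ys)
  case Nil then show ?thesis by (simp add: red_step_def)
next
  case (Cons y ys')
  assume r: "reduced ys"
  then show ?thesis using Cons by (auto simp: red_step_def intro: reduced_tl)
qed

lemma reduced_foldr: "reduced ys \<Longrightarrow> reduced (foldr red_step xs ys)"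
  by (induction xs) (auto intro: reduced_red_step)

lemma reduced_reduce: "reduced (reduce xs)"
  by (simp add: reduce_foldr reduced_foldr)

lemma reduce_reduced: "reduced xs \<Longrightarrow> reduce xs = xs"
proof (induction xs)
  case Nil then show ?case by (simp add: reduce_foldr)
next
  case (Cons x xs)
  then have "reduce xs = xs" using reduced_tl by blast
  then show ?case using Cons.prems
    by (cases xs) (auto simp: reduce_foldr red_step_def)
qed

lemma reduce_eq_iff: "reduce w = w \<longleftrightarrow> reduced w"
  by (metis reduce_reduced reduced_reduce)

lemma red_step_cancel:
  assumes "reduced W" "fst x = fst y" "snd x \<noteq> snd y"
  shows "red_step x (red_step y W) = W"
proof (cases W)
  case Nil then show ?thesis using assms by (simp add: red_step_def)
next
  case (Cons z W')
  show ?thesis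
  proof (cases "fst y = fst z \<and> snd y \<noteq> snd z")
    case True
    then have xz: "x = z" using assms by (cases x, cases z) auto
    have "red_step z W' = z # W'"
      using assms(1) Cons by (cases W') (auto simp: red_step_def)
    then show ?thesis using True Cons xz by (simp add: red_step_def)
  next
    case False
    then show ?thesis using Cons assms by (auto simp add: red_step_def)
  qed
qed

lemma red_step_foldr:
  assumes "reduced r" "reduced z"
  shows "red_step x (foldr red_step r z) = foldr red_step (red_step x r) z"
proof (cases r)
  case Nil then show ?thesis by (simp add: red_step_def)
next
  case (Cons y r')
  show ?thesis
  proof (cases "fst x = fst y \<and> snd x \<noteq> snd y")
    case True
    have "reduced (foldr red_step r' z)" using assms(2) by (rule reduced_foldr)
    then show ?thesis using True Cons red_step_cancel[of "foldr red_step r' z" x y]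
      by (simp add: red_step_def[of x "y # r'"])
  next
    case False
    then show ?thesis using Cons by (auto simp add: red_step_def[of x "y # r'"])
  qed
qed

lemma foldr_reduce:
  assumes "reduced z"
  shows "foldr red_step xs z = foldr red_step (reduce xs) z"
proof (induction xs)
  case Nil then show ?case by (simp add: reduce_foldr)
next
  case (Cons x xs)
  have "foldr red_step (x # xs) z = red_step x (foldr red_step (reduce xs) z)"
    using Cons by simp
  also have "\<dots> = foldr red_step (red_step x (reduce xs)) z"
    by (rule red_step_foldr[OF reduced_reduce assms])
  finally show ?case by (simp add: reduce_foldr)
qed

lemma reduce_append: "reduce (xs @ ys) = foldr red_step xs (reduce ys)"
  by (simp add: reduce_foldr)

lemma reduce_assoc: "reduce (reduce (u @ v) @ w) = reduce (u @ reduce (v @ w))"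
proof -
  have "reduce (reduce (u @ v) @ w) = foldr red_step (reduce (u @ v)) (reduce w)"
    by (rule reduce_append)
  also have "\<dots> = foldr red_step (u @ v) (reduce w)"
    by (rule foldr_reduce[symmetric, OF reduced_reduce])
  also have "\<dots> = foldr red_step u (reduce (v @ w))"
    by (simp add: reduce_append)
  also have "\<dots> = reduce (u @ reduce (v @ w))"
    by (simp add: reduce_append reduce_reduced[OF reduced_foldr[OF reduced_reduce]])
  finally show ?thesis .
qed

lemma set_red_step: "set (red_step x ys) \<subseteq> insert x (set ys)"
  by (auto simp: red_step_def split: list.splits)

lemma set_foldr_red_step: "set (foldr red_step xs ys) \<subseteq> set xs \<union> set ys"
  by (induction xs) (use set_red_step in fastforce)+

lemma set_reduce: "set (reduce xs) \<subseteq> set xs"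
  using set_foldr_red_step[of xs "[]"] by (simp add: reduce_foldr)

definition finv :: "('a \<times> bool) list \<Rightarrow> ('a \<times> bool) list" where
  "finv w = rev (map (\<lambda>(a, b). (a, \<not> b)) w)"

lemma foldr_finv: "foldr red_step (finv w) w = []"
proof (induction w)
  case Nil then show ?case by (simp add: finv_def)
next
  case (Cons a w)
  obtain x b where a: "a = (x, b)" by force
  have "finv (a # w) = finv w @ [(x, \<not> b)]" by (simp add: finv_def a)
  then show ?case using Cons by (simp add: a red_step_def)
qed

lemma set_finv: "set (finv w) \<subseteq> fst ` set w \<times> UNIV"
  by (force simp: finv_def)

lemma free_group_group: "group (free_group S)"
proof (rule groupI)
  fix x y assume "x \<in> carrier (free_group S)" "y \<in> carrier (free_group S)"
  then show "x \<otimes>\<^bsub>free_group S\<^esub> y \<in> carrier (free_group S)"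
    using set_reduce[of "x @ y"] by (auto simp: free_group_def reduce_eq_iff reduced_reduce)
next
  show "\<one>\<^bsub>free_group S\<^esub> \<in> carrier (free_group S)"
    by (simp add: free_group_def reduce_foldr)
next
  fix x y z
  show "x \<otimes>\<^bsub>free_group S\<^esub> y \<otimes>\<^bsub>free_group S\<^esub> z =
        x \<otimes>\<^bsub>free_group S\<^esub> (y \<otimes>\<^bsub>free_group S\<^esub> z)"
    by (simp add: free_group_def reduce_assoc)
next
  fix x assume "x \<in> carrier (free_group S)"
  then show "\<one>\<^bsub>free_group S\<^esub> \<otimes>\<^bsub>free_group S\<^esub> x = x"
    by (simp add: free_group_def)
next
  fix x assume x: "x \<in> carrier (free_group S)"
  show "\<exists>y\<in>carrier (free_group S). y \<otimes>\<^bsub>free_group S\<^esub> x = \<one>\<^bsub>free_group S\<^esub>"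
  proof (intro bexI)
    have rx: "reduced x" using x by (simp add: free_group_def reduce_eq_iff)
    show "reduce (finv x) \<otimes>\<^bsub>free_group S\<^esub> x = \<one>\<^bsub>free_group S\<^esub>"
      using foldr_reduce[OF rx, of "finv x"] foldr_finv[of x]
      by (simp add: free_group_def reduce_append reduce_reduced rx)
    have "set (reduce (finv x)) \<subseteq> S \<times> UNIV"
      using set_reduce[of "finv x"] set_finv[of x] x by (fastforce simp: free_group_def)
    then show "reduce (finv x) \<in> carrier (free_group S)"
      by (simp add: free_group_def reduce_eq_iff reduced_reduce)
  qed
qed



lemma mult_map_Nil [simp]: "mult_map G [] = \<one>\<^bsub>G\<^esub>"
  by (simp add: mult_map_def)

lemma mult_map_Cons [simp]:
  "mult_map G ((a, b) # w) = (if b then a else inv\<^bsub>G\<^esub> a) \<otimes>\<^bsub>G\<^esub> mult_map G w"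
  by (simp add: mult_map_def)

lemma mult_map_closed:
  assumes "group G" "fst ` set w \<subseteq> carrier G"
  shows "mult_map G w \<in> carrier G"
  using assms(2)
proof (induction w)
  case Nil then show ?case using group.is_monoid[OF assms(1)] by (simp add: monoid.one_closed)
next
  case (Cons a w)
  then show ?case using assms(1)
    by (cases a) (auto simp: group.inv_closed monoid.m_closed group.is_monoid)
qed

lemma mult_map_red_step:
  assumes G: "group G" and "fst x \<in> carrier G" "fst ` set ys \<subseteq> carrier G"
  shows "mult_map G (red_step x ys) = mult_map G [x] \<otimes>\<^bsub>G\<^esub> mult_map G ys"
proof -
  interpret group G by (rule G)
  show ?thesis
  proof (cases ys)
    case Nil then show ?thesis using assms by (cases x) (simp add: red_step_def)
  next
    case (Cons y ys')
    have ys': "mult_map G ys' \<in> carrier G" using mult_map_closed[OF G, of ys'] assms Cons by auto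
    obtain a b where x: "x = (a, b)" by force
    obtain c d where y: "y = (c, d)" by force
    have a: "a \<in> carrier G" using assms x by simp
    show ?thesis
    proof (cases "a = c \<and> b \<noteq> d")
      case True
      then show ?thesis using Cons x y a ys'
        by (auto simp: red_step_def m_assoc[symmetric])
    next
      case False
      then show ?thesis using Cons x y a ys'
        by (auto simp: red_step_def)
    qed
  qed
qed

lemma mult_map_foldr:
  assumes G: "group G" and "fst ` set xs \<subseteq> carrier G" "fst ` set ys \<subseteq> carrier G"
  shows "mult_map G (foldr red_step xs ys) = mult_map G xs \<otimes>\<^bsub>G\<^esub> mult_map G ys"
  using assms(2)
proof (induction xs)
  case Nil
  then show ?case using mult_map_closed[OF G assms(3)] G by (simp add: group.is_monoid monoid.l_one)
next
  case (Cons x xs)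
  interpret group G by (rule G)
  have s: "fst ` set (foldr red_step xs ys) \<subseteq> carrier G"
    using set_foldr_red_step[of xs ys] Cons.prems assms(3) by (auto 0 3)
  have c1: "mult_map G [x] \<in> carrier G" using mult_map_closed[OF G, of "[x]"] Cons.prems by auto
  have c2: "mult_map G xs \<in> carrier G" using mult_map_closed[OF G, of xs] Cons.prems by auto
  have c3: "mult_map G ys \<in> carrier G" using mult_map_closed[OF G assms(3)] .
  have "mult_map G (foldr red_step (x # xs) ys) = mult_map G [x] \<otimes>\<^bsub>G\<^esub> mult_map G (foldr red_step xs ys)"
    using mult_map_red_step[OF G _ s, of x] Cons.prems by simp
  also have "\<dots> = mult_map G [x] \<otimes>\<^bsub>G\<^esub> (mult_map G xs \<otimes>\<^bsub>G\<^esub> mult_map G ys)"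
    using Cons by simp
  also have "\<dots> = mult_map G (x # xs) \<otimes>\<^bsub>G\<^esub> mult_map G ys"
    using c1 c2 c3 Cons.prems by (cases x) (auto simp add: m_assoc)
  finally show ?case .
qed

lemma mult_map_hom:
  assumes G: "group G"
  shows "mult_map G \<in> hom (free_group (carrier G)) G"
proof (rule homI)
  fix w assume "w \<in> carrier (free_group (carrier G))"
  then show "mult_map G w \<in> carrier G"
    by (intro mult_map_closed[OF G]) (auto simp: free_group_def)
next
  fix u v assume u: "u \<in> carrier (free_group (carrier G))" and v: "v \<in> carrier (free_group (carrier G))"
  have su: "fst ` set u \<subseteq> carrier G" and sv: "fst ` set v \<subseteq> carrier G"
    using u v by (auto simp: free_group_def)
  have rv: "reduce v = v" using v by (simp add: free_group_def)
  show "mult_map G (u \<otimes>\<^bsub>free_group (carrier G)\<^esub> v) = mult_map G u \<otimes>\<^bsub>G\<^esub> mult_map G v"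
    using mult_map_foldr[OF G su sv] by (simp add: free_group_def reduce_append rv)
qed

lemma mult_map_gen:
  assumes "group G" "x \<in> carrier G"
  shows "mult_map G (free_gen x) = x"
  using assms by (simp add: free_gen_def group.is_monoid monoid.r_one)

lemma free_gen_carrier: "x \<in> S \<Longrightarrow> free_gen x \<in> carrier (free_group S)"
  by (simp add: free_gen_def free_group_def reduce_foldr red_step_def)

lemma coarser_cont:
  assumes "topspace S = topspace T" "\<And>U. openin S U \<Longrightarrow> openin T U"
  shows "continuous_map T S (\<lambda>x. x)"
  unfolding continuous_map_def
proof (intro conjI allI impI)
  show "(\<lambda>x. x) \<in> topspace T \<rightarrow> topspace S" using assms by auto
  fix U assume "openin S U"
  moreover have "{x \<in> topspace T. x \<in> U} = U" using openin_subset[OF \<open>openin S U\<close>] assms by auto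
  ultimately show "openin T {x \<in> topspace T. x \<in> U}" using assms by simp
qed

lemma cont_coarser:
  assumes "continuous_map T S (\<lambda>x. x)" "topspace S = topspace T" "openin S U"
  shows "openin T U"
proof -
  have "{x \<in> topspace T. x \<in> U} = U" using openin_subset[OF assms(3)] assms(2) by auto
  then show ?thesis using openin_continuous_map_preimage[OF assms(1,3)] by simp
qed

definition indisc :: "'a set \<Rightarrow> 'a topology" where
  "indisc A = topology (\<lambda>U. U = {} \<or> U = A)"

lemma openin_indisc: "openin (indisc A) U \<longleftrightarrow> U = {} \<or> U = A"
proof -
  have "istopology (\<lambda>U. U = {} \<or> U = A)"
    unfolding istopology_def
  proof (intro conjI allI impI)
    fix K :: "'a set set" assume "\<forall>S\<in>K. S = {} \<or> S = A"
    then have "K \<subseteq> {{}, A}" by auto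
    then show "\<Union>K = {} \<or> \<Union>K = A" by auto
  qed auto
  then show ?thesis by (simp add: indisc_def topology_inverse')
qed

lemma topspace_indisc [simp]: "topspace (indisc A) = A"
  unfolding topspace_def using openin_indisc[of A] by auto

lemma cont_indisc:
  assumes "g ` topspace Z \<subseteq> B"
  shows "continuous_map Z (indisc B) g"
  unfolding continuous_map_def
proof (intro conjI allI impI)
  fix U assume "openin (indisc B) U"
  then have "U = {} \<or> U = B" by (simp add: openin_indisc)
  then show "openin Z {x \<in> topspace Z. g x \<in> U}"
  proof
    assume "U = B"
    then have "{x \<in> topspace Z. g x \<in> U} = topspace Z" using assms by auto
    then show ?thesis by simp
  qed simp
qed (use assms in auto)

lemma tg_group: "topological_group G T \<Longrightarrow> group G"
  by (simp add: topological_group_def group_with_topology_def)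

lemma tg_topspace: "topological_group G T \<Longrightarrow> topspace T = carrier G"
  by (simp add: topological_group_def group_with_topology_def)

lemma tg_mult: "topological_group G T \<Longrightarrow> continuous_map (prod_topology T T) T (\<lambda>(x, y). x \<otimes>\<^bsub>G\<^esub> y)"
  by (simp add: topological_group_def)

lemma tg_inv: "topological_group G T \<Longrightarrow> continuous_map T T (m_inv G)"
  by (simp add: topological_group_def)

lemma tg_right_mult:
  assumes "topological_group G T" "c \<in> carrier G"
  shows "continuous_map T T (\<lambda>x. x \<otimes>\<^bsub>G\<^esub> c)"
proof -
  have "continuous_map T (prod_topology T T) (\<lambda>x. (x, c))"
    using assms tg_topspace[OF assms(1)] by (intro continuous_map_pairedI) auto
  from continuous_map_compose[OF this tg_mult[OF assms(1)]]
  show ?thesis by (simp add: o_def)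
qed

lemma tg_right_transl_open:
  assumes T: "topological_group G T" and k: "k \<in> carrier G" and V: "openin T V"
  shows "openin T ((\<lambda>v. v \<otimes>\<^bsub>G\<^esub> k) ` V)"
proof -
  interpret group G using tg_group[OF T] .
  have Vc: "V \<subseteq> carrier G" using openin_subset[OF V] tg_topspace[OF T] by simp
  have "(\<lambda>v. v \<otimes>\<^bsub>G\<^esub> k) ` V = {x \<in> topspace T. x \<otimes>\<^bsub>G\<^esub> inv\<^bsub>G\<^esub> k \<in> V}"
  proof (intro equalityI subsetI)
    fix x assume "x \<in> (\<lambda>v. v \<otimes>\<^bsub>G\<^esub> k) ` V"
    then obtain v where "v \<in> V" "x = v \<otimes>\<^bsub>G\<^esub> k" by auto
    then show "x \<in> {x \<in> topspace T. x \<otimes>\<^bsub>G\<^esub> inv\<^bsub>G\<^esub> k \<in> V}"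
      using Vc k tg_topspace[OF T] by (auto simp: m_assoc)
  next
    fix x assume "x \<in> {x \<in> topspace T. x \<otimes>\<^bsub>G\<^esub> inv\<^bsub>G\<^esub> k \<in> V}"
    then have x: "x \<in> carrier G" "x \<otimes>\<^bsub>G\<^esub> inv\<^bsub>G\<^esub> k \<in> V" using tg_topspace[OF T] by auto
    then have "x = (x \<otimes>\<^bsub>G\<^esub> inv\<^bsub>G\<^esub> k) \<otimes>\<^bsub>G\<^esub> k" using k by (simp add: m_assoc)
    then show "x \<in> (\<lambda>v. v \<otimes>\<^bsub>G\<^esub> k) ` V" using x by blast
  qed
  also have "openin T \<dots>"
    by (rule openin_continuous_map_preimage[OF tg_right_mult[OF T] V]) (use k in simp)
  finally show ?thesis .
qed



section \<open>Quotient of a topological group along a surjective homomorphism\<close>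

definition qtop :: "('a, 'm) monoid_scheme \<Rightarrow> 'b topology \<Rightarrow> ('b \<Rightarrow> 'a) \<Rightarrow> 'a topology" where
  "qtop H S q = topology (\<lambda>U. U \<subseteq> carrier H \<and> openin S {x \<in> topspace S. q x \<in> U})"

lemma qtop_open:
  assumes "q ` topspace S \<subseteq> carrier H"
  shows "openin (qtop H S q) U \<longleftrightarrow> U \<subseteq> carrier H \<and> openin S {x \<in> topspace S. q x \<in> U}"
proof -
  have "istopology (\<lambda>U. U \<subseteq> carrier H \<and> openin S {x \<in> topspace S. q x \<in> U})"
    unfolding istopology_def
  proof (rule conjI; intro allI impI)
    fix U V assume U: "U \<subseteq> carrier H \<and> openin S {x \<in> topspace S. q x \<in> U}"
      and V: "V \<subseteq> carrier H \<and> openin S {x \<in> topspace S. q x \<in> V}"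
    have "{x \<in> topspace S. q x \<in> U \<inter> V} = {x \<in> topspace S. q x \<in> U} \<inter> {x \<in> topspace S. q x \<in> V}"
      by auto
    then show "U \<inter> V \<subseteq> carrier H \<and> openin S {x \<in> topspace S. q x \<in> U \<inter> V}"
      using U V by auto
  next
    fix K assume K: "\<forall>U\<in>K. U \<subseteq> carrier H \<and> openin S {x \<in> topspace S. q x \<in> U}"
    have "{x \<in> topspace S. q x \<in> \<Union>K} = (\<Union>U\<in>K. {x \<in> topspace S. q x \<in> U})"
      by auto
    then show "\<Union>K \<subseteq> carrier H \<and> openin S {x \<in> topspace S. q x \<in> \<Union>K}"
      using K by auto
  qed
  then show ?thesis by (simp add: qtop_def topology_inverse')
qed

lemma qtop_topspace:
  assumes "q ` topspace S \<subseteq> carrier H"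
  shows "topspace (qtop H S q) = carrier H"
proof -
  have "openin (qtop H S q) (carrier H)"
  proof -
    have "{x \<in> topspace S. q x \<in> carrier H} = topspace S" using assms by auto
    then show ?thesis by (simp add: qtop_open[OF assms])
  qed
  moreover have "\<And>U. openin (qtop H S q) U \<Longrightarrow> U \<subseteq> carrier H" by (simp add: qtop_open[OF assms])
  ultimately show ?thesis by (metis openin_subset openin_topspace subset_antisym)
qed

lemma qtop_tg:
  assumes S: "topological_group K S" and H: "group H" and q: "q \<in> hom K H"
    and surj: "q ` carrier K = carrier H"
  shows "topological_group H (qtop H S q)"
    and "\<And>V. openin S V \<Longrightarrow> openin (qtop H S q) (q ` V)"
proof -
  interpret K: group K using tg_group[OF S] .
  interpret H: group H by (rule H)
  interpret group_hom K H q by (unfold_locales) (rule q)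
  have tsS: "topspace S = carrier K" by (rule tg_topspace[OF S])
  have qS: "q ` topspace S \<subseteq> carrier H" using surj tsS by simp
  note qo = qtop_open[OF qS]
  have tsQ: "topspace (qtop H S q) = carrier H" by (rule qtop_topspace[OF qS])
  have openmap: "openin (qtop H S q) (q ` V)" if V: "openin S V" for V
  proof -
    have Vc: "V \<subseteq> carrier K" using openin_subset[OF V] tsS by simp
    have "{x \<in> topspace S. q x \<in> q ` V} = (\<Union>k\<in>kernel K H q. (\<lambda>v. v \<otimes>\<^bsub>K\<^esub> k) ` V)"
    proof (intro equalityI subsetI)
      fix x assume "x \<in> {x \<in> topspace S. q x \<in> q ` V}"
      then obtain v where x: "x \<in> carrier K" and v: "v \<in> V" "q x = q v" using tsS by auto
      have vc: "v \<in> carrier K" using v Vc by auto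
      define k where "k = inv\<^bsub>K\<^esub> v \<otimes>\<^bsub>K\<^esub> x"
      have "q k = \<one>\<^bsub>H\<^esub>" using x vc v by (simp add: k_def)
      then have "k \<in> kernel K H q" using x vc by (simp add: kernel_def k_def)
      moreover have "x = v \<otimes>\<^bsub>K\<^esub> k" using x vc by (simp add: k_def K.m_assoc[symmetric])
      ultimately show "x \<in> (\<Union>k\<in>kernel K H q. (\<lambda>v. v \<otimes>\<^bsub>K\<^esub> k) ` V)" using v by blast
    next
      fix x assume "x \<in> (\<Union>k\<in>kernel K H q. (\<lambda>v. v \<otimes>\<^bsub>K\<^esub> k) ` V)"
      then obtain k v where k: "k \<in> carrier K" "q k = \<one>\<^bsub>H\<^esub>" and v: "v \<in> V" and x: "x = v \<otimes>\<^bsub>K\<^esub> k"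
        by (auto simp: kernel_def)
      have vc: "v \<in> carrier K" using v Vc by auto
      then show "x \<in> {x \<in> topspace S. q x \<in> q ` V}" using k v x tsS by auto
    qed
    also have "openin S \<dots>"
      by (intro openin_Union) (auto simp: kernel_def intro: tg_right_transl_open[OF S _ V])
    finally have "openin S {x \<in> topspace S. q x \<in> q ` V}" .
    moreover have "q ` V \<subseteq> carrier H" using Vc by auto
    ultimately show ?thesis by (simp add: qo)
  qed
  then show "\<And>V. openin S V \<Longrightarrow> openin (qtop H S q) (q ` V)" .
  have multc: "continuous_map (prod_topology (qtop H S q) (qtop H S q)) (qtop H S q) (\<lambda>(x, y). x \<otimes>\<^bsub>H\<^esub> y)"
    unfolding continuous_map_def
  proof (intro conjI allI impI)
    fix U assume U: "openin (qtop H S q) U"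
    define P where "P = {x \<in> topspace S. q x \<in> U}"
    have P: "openin S P" using U by (simp add: qo P_def)
    define A where "A = {z \<in> topspace (prod_topology S S). (\<lambda>(x, y). x \<otimes>\<^bsub>K\<^esub> y) z \<in> P}"
    have A: "openin (prod_topology S S) A"
      unfolding A_def by (rule openin_continuous_map_preimage[OF tg_mult[OF S] P])
    show "openin (prod_topology (qtop H S q) (qtop H S q))
           {z \<in> topspace (prod_topology (qtop H S q) (qtop H S q)). (\<lambda>(x, y). x \<otimes>\<^bsub>H\<^esub> y) z \<in> U}"
      (is "openin ?QQ ?W")
    proof (subst openin_subopen, intro ballI)
      fix z assume "z \<in> ?W"
      then obtain a b where z: "z = (a, b)" "a \<in> carrier H" "b \<in> carrier H" "a \<otimes>\<^bsub>H\<^esub> b \<in> U"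
        using tsQ by auto
      obtain u v where uv: "u \<in> carrier K" "v \<in> carrier K" "q u = a" "q v = b"
        using z surj by (metis imageE)
      have "(u, v) \<in> A" using uv z tsS by (simp add: A_def P_def)
      then obtain V1 V2 where V: "openin S V1" "openin S V2" "u \<in> V1" "v \<in> V2" "V1 \<times> V2 \<subseteq> A"
        using A unfolding openin_prod_topology_alt by meson
      have V1c: "V1 \<subseteq> carrier K" and V2c: "V2 \<subseteq> carrier K"
        using openin_subset[OF V(1)] openin_subset[OF V(2)] tsS by auto
      show "\<exists>T. openin ?QQ T \<and> z \<in> T \<and> T \<subseteq> ?W"
      proof (intro exI conjI)
        show "openin ?QQ (q ` V1 \<times> q ` V2)"
          using openmap V by (simp add: openin_prod_Times_iff)
        show "z \<in> q ` V1 \<times> q ` V2" using z uv V by auto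
        show "q ` V1 \<times> q ` V2 \<subseteq> ?W"
        proof
          fix w assume "w \<in> q ` V1 \<times> q ` V2"
          then obtain v1 v2 where w: "w = (q v1, q v2)" "v1 \<in> V1" "v2 \<in> V2" by auto
          then have "(v1, v2) \<in> A" using V by auto
          then have "q (v1 \<otimes>\<^bsub>K\<^esub> v2) \<in> U" by (simp add: A_def P_def)
          moreover have "v1 \<in> carrier K" "v2 \<in> carrier K" using w V1c V2c by auto
          ultimately show "w \<in> ?W" using w tsQ by auto
        qed
      qed
    qed
  qed (use tsQ in auto)
  have invc: "continuous_map (qtop H S q) (qtop H S q) (m_inv H)"
    unfolding continuous_map_def
  proof (intro conjI allI impI)
    fix U assume U: "openin (qtop H S q) U"
    define P where "P = {x \<in> topspace S. q x \<in> U}"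
    have P: "openin S P" using U by (simp add: qo P_def)
    have B: "openin S {x \<in> topspace S. inv\<^bsub>K\<^esub> x \<in> P}"
      by (rule openin_continuous_map_preimage[OF tg_inv[OF S] P])
    have "{y \<in> topspace (qtop H S q). inv\<^bsub>H\<^esub> y \<in> U} = q ` {x \<in> topspace S. inv\<^bsub>K\<^esub> x \<in> P}"
    proof (intro equalityI subsetI)
      fix y assume "y \<in> {y \<in> topspace (qtop H S q). inv\<^bsub>H\<^esub> y \<in> U}"
      then have y: "y \<in> carrier H" "inv\<^bsub>H\<^esub> y \<in> U" using tsQ by auto
      then obtain x where x: "x \<in> carrier K" "y = q x" using surj by auto
      then show "y \<in> q ` {x \<in> topspace S. inv\<^bsub>K\<^esub> x \<in> P}" using y tsS by (auto simp: P_def)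
    next
      fix y assume "y \<in> q ` {x \<in> topspace S. inv\<^bsub>K\<^esub> x \<in> P}"
      then obtain x where "x \<in> carrier K" "inv\<^bsub>K\<^esub> x \<in> P" "y = q x" using tsS by auto
      then show "y \<in> {y \<in> topspace (qtop H S q). inv\<^bsub>H\<^esub> y \<in> U}" using tsQ by (auto simp: P_def)
    qed
    then show "openin (qtop H S q) {y \<in> topspace (qtop H S q). inv\<^bsub>H\<^esub> y \<in> U}"
      using openmap[OF B] by simp
  qed (use tsQ in auto)
  show "topological_group H (qtop H S q)"
    using multc invc tsQ H by (simp add: topological_group_def group_with_topology_def)
qed

section \<open>Pullback of a group topology along a homomorphism\<close>

lemma pullback_tg:
  assumes S: "topological_group G S" and K: "group K" and h: "h \<in> hom K G"
  shows "topological_group K (pullback_topology (carrier K) h S)"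
proof -
  interpret G: group G using tg_group[OF S] .
  interpret K: group K by (rule K)
  interpret group_hom K G h by (unfold_locales) (rule h)
  let ?P = "pullback_topology (carrier K) h S"
  have tsS: "topspace S = carrier G" by (rule tg_topspace[OF S])
  have tsP: "topspace ?P = carrier K"
    by (auto simp: topspace_pullback_topology tsS)
  have hc: "continuous_map ?P S h"
    using continuous_map_pullback[OF continuous_map_id, of "carrier K" h S] by simp
  have m1: "continuous_map (prod_topology ?P ?P) S (h \<circ> (\<lambda>(x, y). x \<otimes>\<^bsub>K\<^esub> y))"
  proof -
    have "continuous_map (prod_topology ?P ?P) (prod_topology S S) (\<lambda>(x, y). (h x, h y))"
      using hc by (simp add: continuous_map_prod_top)
    from continuous_map_compose[OF this tg_mult[OF S]]
    have "continuous_map (prod_topology ?P ?P) S ((\<lambda>(x, y). x \<otimes>\<^bsub>G\<^esub> y) \<circ> (\<lambda>(x, y). (h x, h y)))" .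
    then show ?thesis
      by (rule continuous_map_eq) (auto simp: tsP)
  qed
  have mc: "continuous_map (prod_topology ?P ?P) ?P (\<lambda>(x, y). x \<otimes>\<^bsub>K\<^esub> y)"
    by (rule continuous_map_pullback'[OF m1]) (auto simp: tsP)
  have i1: "continuous_map ?P S (h \<circ> m_inv K)"
  proof -
    from continuous_map_compose[OF hc tg_inv[OF S]]
    have "continuous_map ?P S (m_inv G \<circ> h)" .
    then show ?thesis by (rule continuous_map_eq) (auto simp: tsP)
  qed
  have ic: "continuous_map ?P ?P (m_inv K)"
    by (rule continuous_map_pullback'[OF i1]) (auto simp: tsP)
  show ?thesis using mc ic tsP K by (simp add: topological_group_def group_with_topology_def)
qed



section \<open>The free topological group\<close>

lemma indisc_tg: "topological_group (free_group S) (indisc (carrier (free_group S)))"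
proof -
  interpret group "free_group S" by (rule free_group_group)
  show ?thesis
    unfolding topological_group_def group_with_topology_def
    by (auto intro!: cont_indisc simp: free_group_group)
qed

lemma indisc_gen: "topspace Y = S \<Longrightarrow> continuous_map Y (indisc (carrier (free_group S))) free_gen"
  by (rule cont_indisc) (auto simp: free_gen_carrier)

lemma FM_Union:
  "\<Union>{U. \<exists>T. topological_group (free_group (topspace Y)) T \<and> continuous_map Y T free_gen \<and> openin T U}
   = carrier (free_group (topspace Y))"
proof (intro equalityI subsetI)
  fix x assume "x \<in> \<Union>{U. \<exists>T. topological_group (free_group (topspace Y)) T \<and> continuous_map Y T free_gen \<and> openin T U}"
  then obtain U T where "topological_group (free_group (topspace Y)) T" "openin T U" "x \<in> U" by auto
  then show "x \<in> carrier (free_group (topspace Y))"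
    using openin_subset tg_topspace by fastforce
next
  fix x assume x: "x \<in> carrier (free_group (topspace Y))"
  let ?T = "indisc (carrier (free_group (topspace Y)))"
  have "carrier (free_group (topspace Y)) \<in> {U. \<exists>T. topological_group (free_group (topspace Y)) T \<and> continuous_map Y T free_gen \<and> openin T U}"
    using indisc_tg[of "topspace Y"] indisc_gen[of Y "topspace Y"] openin_indisc by blast
  then show "x \<in> \<Union>{U. \<exists>T. topological_group (free_group (topspace Y)) T \<and> continuous_map Y T free_gen \<and> openin T U}"
    using x by blast
qed

lemma FM_topspace: "topspace (FM_topology Y) = carrier (free_group (topspace Y))"
  unfolding FM_topology_def topology_generated_by_topspace by (rule FM_Union)

lemma FM_basis:
  "topological_group (free_group (topspace Y)) T \<Longrightarrow> continuous_map Y T free_gen \<Longrightarrow> openin T U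
   \<Longrightarrow> openin (FM_topology Y) U"
  unfolding FM_topology_def by (rule topology_generated_by_Basis) blast

lemma FM_finer:
  assumes "topological_group (free_group (topspace Y)) T" "continuous_map Y T free_gen"
  shows "continuous_map (FM_topology Y) T (\<lambda>x. x)"
  by (rule coarser_cont) (simp add: tg_topspace[OF assms(1)] FM_topspace, rule FM_basis[OF assms])

lemma FM_cont_into:
  assumes "\<And>T U. topological_group (free_group (topspace Y)) T \<Longrightarrow> continuous_map Y T free_gen
             \<Longrightarrow> openin T U \<Longrightarrow> openin Z (f -` U \<inter> topspace Z)"
    and "f ` topspace Z \<subseteq> carrier (free_group (topspace Y))"
  shows "continuous_map Z (FM_topology Y) f"
  unfolding FM_topology_def
proof (rule continuous_on_generated_topo)
  fix U assume "U \<in> {U. \<exists>T. topological_group (free_group (topspace Y)) T \<and> continuous_map Y T free_gen \<and> openin T U}"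
  then show "openin Z (f -` U \<inter> topspace Z)" using assms(1) by blast
next
  show "f ` topspace Z \<subseteq> \<Union> {U. \<exists>T. topological_group (free_group (topspace Y)) T \<and> continuous_map Y T free_gen \<and> openin T U}"
    using assms(2) FM_Union[of Y] by simp
qed

lemma FM_gen_cont: "continuous_map Y (FM_topology Y) free_gen"
proof (rule FM_cont_into)
  fix T U assume "topological_group (free_group (topspace Y)) T" "continuous_map Y T free_gen" "openin T U"
  then have "openin Y {x \<in> topspace Y. free_gen x \<in> U}" by (simp add: openin_continuous_map_preimage)
  moreover have "{x \<in> topspace Y. free_gen x \<in> U} = free_gen -` U \<inter> topspace Y" by auto
  ultimately show "openin Y (free_gen -` U \<inter> topspace Y)" by simp
qed (auto simp: free_gen_carrier)

lemma FM_tg: "topological_group (free_group (topspace Y)) (FM_topology Y)"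
proof -
  let ?F = "free_group (topspace Y)"
  let ?M = "FM_topology Y"
  interpret group ?F by (rule free_group_group)
  have mc: "continuous_map (prod_topology ?M ?M) ?M (\<lambda>(x, y). x \<otimes>\<^bsub>?F\<^esub> y)"
  proof (rule FM_cont_into)
    fix T U assume T: "topological_group ?F T" "continuous_map Y T free_gen" and U: "openin T U"
    have "continuous_map (prod_topology ?M ?M) (prod_topology T T) (\<lambda>(x, y). (x, y))"
      by (rule continuous_map_prod_top[THEN iffD2]) (use FM_finer[OF T] in blast)
    from continuous_map_compose[OF this tg_mult[OF T(1)]]
    have "continuous_map (prod_topology ?M ?M) T (\<lambda>(x, y). x \<otimes>\<^bsub>?F\<^esub> y)"
      by (simp add: o_def case_prod_unfold)
    from openin_continuous_map_preimage[OF this U]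
    show "openin (prod_topology ?M ?M) ((\<lambda>(x, y). x \<otimes>\<^bsub>?F\<^esub> y) -` U \<inter> topspace (prod_topology ?M ?M))"
      by (simp add: Int_commute Collect_conj_eq vimage_def)
  qed (auto simp: FM_topspace)
  have ic: "continuous_map ?M ?M (m_inv ?F)"
  proof (rule FM_cont_into)
    fix T U assume T: "topological_group ?F T" "continuous_map Y T free_gen" and U: "openin T U"
    from continuous_map_compose[OF FM_finer[OF T] tg_inv[OF T(1)]]
    have "continuous_map ?M T (m_inv ?F)" by (simp add: o_def)
    from openin_continuous_map_preimage[OF this U]
    show "openin ?M (m_inv ?F -` U \<inter> topspace ?M)"
      by (simp add: Int_commute Collect_conj_eq vimage_def)
  qed (auto simp: FM_topspace)
  show ?thesis using mc ic
    by (simp add: topological_group_def group_with_topology_def FM_topspace free_group_group)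
qed

section \<open>tau\<close>

lemma tau_qtop: "tau G T = qtop G (FM_topology T) (mult_map G)"
  by (simp add: tau_def qtop_def)

locale gwt =
  fixes G :: "('a, 'm) monoid_scheme" and T :: "'a topology"
  assumes gwt: "group_with_topology G T"
begin

lemma grp: "group G" using gwt by (simp add: group_with_topology_def)
lemma tsT: "topspace T = carrier G" using gwt by (simp add: group_with_topology_def)

lemma FMtg: "topological_group (free_group (carrier G)) (FM_topology T)"
  using FM_tg[of T] by (simp add: tsT)

lemma FMts: "topspace (FM_topology T) = carrier (free_group (carrier G))"
  using FM_topspace[of T] by (simp add: tsT)

lemma mm_hom: "mult_map G \<in> hom (free_group (carrier G)) G"
  by (rule mult_map_hom[OF grp])

lemma mm_into: "mult_map G ` topspace (FM_topology T) \<subseteq> carrier G"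
  using mm_hom by (auto simp: FMts hom_def)

lemma mm_surj: "mult_map G ` carrier (free_group (carrier G)) = carrier G"
proof (intro equalityI subsetI)
  fix x assume "x \<in> mult_map G ` carrier (free_group (carrier G))"
  then show "x \<in> carrier G" using mm_hom by (auto simp: hom_def)
next
  fix x assume x: "x \<in> carrier G"
  then have "mult_map G (free_gen x) = x" by (rule mult_map_gen[OF grp])
  then show "x \<in> mult_map G ` carrier (free_group (carrier G))"
    using free_gen_carrier[OF x] by force
qed

lemma tau_open: "openin (tau G T) U \<longleftrightarrow>
   U \<subseteq> carrier G \<and> openin (FM_topology T) {w \<in> topspace (FM_topology T). mult_map G w \<in> U}"
  unfolding tau_qtop by (rule qtop_open[OF mm_into])

lemma tau_topspace: "topspace (tau G T) = carrier G"
  unfolding tau_qtop by (rule qtop_topspace[OF mm_into])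

lemma tau_tg: "topological_group G (tau G T)"
  unfolding tau_qtop by (rule qtop_tg(1)[OF FMtg grp mm_hom mm_surj])

lemma tau_coarser: "openin (tau G T) U \<Longrightarrow> openin T U"
proof -
  assume U: "openin (tau G T) U"
  then have Uc: "U \<subseteq> carrier G" and P: "openin (FM_topology T) {w \<in> topspace (FM_topology T). mult_map G w \<in> U}"
    by (auto simp: tau_open)
  from openin_continuous_map_preimage[OF FM_gen_cont P]
  have "openin T {x \<in> topspace T. free_gen x \<in> {w \<in> topspace (FM_topology T). mult_map G w \<in> U}}" .
  moreover have "{x \<in> topspace T. free_gen x \<in> {w \<in> topspace (FM_topology T). mult_map G w \<in> U}} = U"
    using Uc by (auto simp: tsT FMts free_gen_carrier mult_map_gen[OF grp])
  ultimately show ?thesis by simp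
qed

lemma tau_finest:
  assumes S: "topological_group G S" and c: "\<And>U. openin S U \<Longrightarrow> openin T U" and U: "openin S U"
  shows "openin (tau G T) U"
proof -
  let ?F = "free_group (carrier G)"
  let ?P = "pullback_topology (carrier ?F) (mult_map G) S"
  have P: "topological_group ?F ?P" by (rule pullback_tg[OF S free_group_group mm_hom])
  have idc: "continuous_map T S (\<lambda>x. x)"
    by (rule coarser_cont) (use tg_topspace[OF S] tsT c in auto)
  have gc: "continuous_map T ?P free_gen"
  proof (rule continuous_map_pullback')
    show "continuous_map T S (mult_map G \<circ> free_gen)"
      by (rule continuous_map_eq[OF idc]) (simp add: tsT mult_map_gen[OF grp])
    show "topspace T \<subseteq> free_gen -` carrier ?F" by (auto simp: tsT free_gen_carrier)
  qed
  have "openin ?P (mult_map G -` U \<inter> carrier ?F)"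
    using U by (auto simp: openin_pullback_topology)
  then have "openin (FM_topology T) (mult_map G -` U \<inter> carrier ?F)"
    using FM_basis[of T ?P] P gc by (simp add: tsT)
  moreover have "mult_map G -` U \<inter> carrier ?F = {w \<in> topspace (FM_topology T). mult_map G w \<in> U}"
    by (auto simp: FMts)
  moreover have "U \<subseteq> carrier G" using openin_subset[OF U] tg_topspace[OF S] by simp
  ultimately show ?thesis by (simp add: tau_open)
qed

end

lemma tau_func:
  assumes G: "group_with_topology G TG" and H: "group_with_topology H TH"
    and f: "f \<in> hom G H" and fc: "continuous_map TG TH f"
  shows "continuous_map (tau G TG) (tau H TH) f"
proof -
  interpret G: gwt G TG by unfold_locales (rule G)
  interpret H: gwt H TH by unfold_locales (rule H)
  let ?P = "pullback_topology (carrier G) f (tau H TH)"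
  have P: "topological_group G ?P" by (rule pullback_tg[OF H.tau_tg G.grp f])
  have Pc: "openin TG U" if PU: "openin ?P U" for U
  proof -
    obtain V where V: "openin (tau H TH) V" "U = f -` V \<inter> carrier G"
      using PU openin_pullback_topology[of "carrier G" f "tau H TH" U] by metis
    have "openin TH V" using H.tau_coarser[OF V(1)] .
    from openin_continuous_map_preimage[OF fc this]
    show ?thesis using V G.tsT by (simp add: Int_commute Collect_conj_eq vimage_def)
  qed
  show ?thesis
    unfolding continuous_map_def
  proof (intro conjI allI impI)
    fix V assume V: "openin (tau H TH) V"
    have "openin ?P (f -` V \<inter> carrier G)" using V by (auto simp: openin_pullback_topology)
    then have "openin (tau G TG) (f -` V \<inter> carrier G)" using G.tau_finest[OF P] Pc by blast
    moreover have "f -` V \<inter> carrier G = {x \<in> topspace (tau G TG). f x \<in> V}"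
      by (auto simp: G.tau_topspace)
    ultimately show "openin (tau G TG) {x \<in> topspace (tau G TG). f x \<in> V}" by simp
  qed (use f in \<open>auto simp: G.tau_topspace H.tau_topspace hom_def\<close>)
qed



lemma cont_ident: "continuous_map Z Z (\<lambda>x. x)"
  using continuous_map_id by (simp add: id_def)

lemma cont_disc:
  assumes "f ` A \<subseteq> B"
  shows "continuous_map (discrete_topology A) (discrete_topology B) f"
  using assms unfolding continuous_map_def by auto

lemma disc_tg:
  assumes G: "group G"
  shows "topological_group G (discrete_topology (carrier G))"
proof -
  interpret group G by (rule G)
  have m: "continuous_map (prod_topology (discrete_topology (carrier G)) (discrete_topology (carrier G)))
            (discrete_topology (carrier G)) (\<lambda>(x, y). x \<otimes>\<^bsub>G\<^esub> y)"
    unfolding prod_topology_discrete_topology[symmetric] by (rule cont_disc) auto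
  have i: "continuous_map (discrete_topology (carrier G)) (discrete_topology (carrier G)) (m_inv G)"
    by (rule cont_disc) auto
  show ?thesis using m i G by (simp add: topological_group_def group_with_topology_def)
qed

theorem proposition3p3:
  fixes G :: "'a monoid" and TG :: "'a topology"
    and H :: "'b monoid" and TH :: "'b topology"
  assumes "group_with_topology G TG" and "group_with_topology H TH"
  shows "tau (G \<times>\<times> H) (prod_topology TG TH) = prod_topology (tau G TG) (tau H TH)
    \<and> (\<forall>f. f \<in> hom G H \<and> quotient_map TG TH f \<longrightarrow> quotient_map (tau G TG) (tau H TH) f)
    \<and> (topological_group G TG \<longleftrightarrow> tau G TG = TG)
    \<and> (TG = discrete_topology (carrier G) \<longleftrightarrow> tau G TG = discrete_topology (carrier G))"
proof -
  interpret G: gwt G TG by unfold_locales (rule assms(1))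
  interpret H: gwt H TH by unfold_locales (rule assms(2))
  interpret Gg: group G by (rule G.grp)
  interpret Hg: group H by (rule H.grp)
  have P3: "topological_group G TG \<longleftrightarrow> tau G TG = TG"
    if "group_with_topology G TG" for G :: "'a monoid" and TG
  proof -
    interpret G: gwt G TG by unfold_locales (rule that)
    show ?thesis
    proof
      assume T: "topological_group G TG"
      show "tau G TG = TG"
        unfolding topology_eq using G.tau_coarser G.tau_finest[OF T] by blast
    next
      assume "tau G TG = TG"
      then show "topological_group G TG" using G.tau_tg by simp
    qed
  qed
  have P4: "TG = discrete_topology (carrier G) \<longleftrightarrow> tau G TG = discrete_topology (carrier G)"
  proof
    assume d: "TG = discrete_topology (carrier G)"
    then have "topological_group G TG" using disc_tg[OF G.grp] by simp
    then show "tau G TG = discrete_topology (carrier G)" using P3[OF assms(1)] d by simp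
  next
    assume d: "tau G TG = discrete_topology (carrier G)"
    have "openin TG {x}" if "x \<in> carrier G" for x
      using G.tau_coarser[of "{x}"] d that by simp
    then show "TG = discrete_topology (carrier G)"
      using discrete_topology_unique[of "carrier G" TG] G.tsT by metis
  qed
  have P2: "\<forall>f. f \<in> hom G H \<and> quotient_map TG TH f \<longrightarrow> quotient_map (tau G TG) (tau H TH) f"
  proof (intro allI impI)
    fix f assume A: "f \<in> hom G H \<and> quotient_map TG TH f"
    then have f: "f \<in> hom G H" and qf: "quotient_map TG TH f" by auto
    have fc: "continuous_map (tau G TG) (tau H TH) f"
      by (rule tau_func[OF assms f quotient_imp_continuous_map[OF qf]])
    have surj: "f ` carrier G = carrier H"
      using qf G.tsT H.tsT by (simp add: quotient_map_def)
    have into: "f ` topspace (tau G TG) \<subseteq> carrier H" using surj G.tau_topspace by simp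
    let ?Q = "qtop H (tau G TG) f"
    have Qtg: "topological_group H ?Q" by (rule qtop_tg(1)[OF G.tau_tg H.grp f surj])
    have Qc: "openin TH U" if U: "openin ?Q U" for U
    proof -
      from U have Uc: "U \<subseteq> carrier H" and o: "openin (tau G TG) {x \<in> topspace (tau G TG). f x \<in> U}"
        by (auto simp: qtop_open[OF into])
      have "openin TG {x \<in> topspace TG. f x \<in> U}"
        using G.tau_coarser[OF o] by (simp add: G.tau_topspace G.tsT)
      then show ?thesis using qf Uc H.tsT by (simp add: quotient_map_def)
    qed
    show "quotient_map (tau G TG) (tau H TH) f"
      unfolding quotient_map_def
    proof (intro conjI allI impI)
      show "f ` topspace (tau G TG) = topspace (tau H TH)"
        using surj by (simp add: G.tau_topspace H.tau_topspace)
      fix U assume Uc: "U \<subseteq> topspace (tau H TH)"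
      show "openin (tau G TG) {x \<in> topspace (tau G TG). f x \<in> U} = openin (tau H TH) U"
      proof
        assume "openin (tau G TG) {x \<in> topspace (tau G TG). f x \<in> U}"
        then have "openin ?Q U" using Uc by (simp add: qtop_open[OF into] H.tau_topspace)
        then show "openin (tau H TH) U" using H.tau_finest[OF Qtg] Qc by blast
      next
        assume "openin (tau H TH) U"
        then show "openin (tau G TG) {x \<in> topspace (tau G TG). f x \<in> U}"
          by (rule openin_continuous_map_preimage[OF fc])
      qed
    qed
  qed
  have P1: "tau (G \<times>\<times> H) (prod_topology TG TH) = prod_topology (tau G TG) (tau H TH)"
  proof -
    have gwtGH: "group_with_topology (G \<times>\<times> H) (prod_topology TG TH)"
      by (simp add: group_with_topology_def DirProd_group G.grp H.grp G.tsT H.tsT)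
    interpret GH: gwt "G \<times>\<times> H" "prod_topology TG TH" by unfold_locales (rule gwtGH)
    let ?PT = "prod_topology (tau G TG) (tau H TH)"
    have tsPT: "topspace ?PT = carrier G \<times> carrier H"
      by (simp add: G.tau_topspace H.tau_topspace)
    have ffst: "continuous_map (prod_topology ?PT ?PT) (tau G TG) (\<lambda>z. fst (fst z))"
      using continuous_map_compose[OF continuous_map_fst[of ?PT ?PT] continuous_map_fst[of "tau G TG" "tau H TH"]]
      by (simp add: o_def)
    have fsnd: "continuous_map (prod_topology ?PT ?PT) (tau G TG) (\<lambda>z. fst (snd z))"
      using continuous_map_compose[OF continuous_map_snd[of ?PT ?PT] continuous_map_fst[of "tau G TG" "tau H TH"]]
      by (simp add: o_def)
    have sfst: "continuous_map (prod_topology ?PT ?PT) (tau H TH) (\<lambda>z. snd (fst z))"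
      using continuous_map_compose[OF continuous_map_fst[of ?PT ?PT] continuous_map_snd[of "tau G TG" "tau H TH"]]
      by (simp add: o_def)
    have ssnd: "continuous_map (prod_topology ?PT ?PT) (tau H TH) (\<lambda>z. snd (snd z))"
      using continuous_map_compose[OF continuous_map_snd[of ?PT ?PT] continuous_map_snd[of "tau G TG" "tau H TH"]]
      by (simp add: o_def)
    have c1: "continuous_map (prod_topology ?PT ?PT) (tau G TG) (\<lambda>z. fst (fst z) \<otimes>\<^bsub>G\<^esub> fst (snd z))"
      using continuous_map_compose[OF continuous_map_pairedI[OF ffst fsnd] tg_mult[OF G.tau_tg]]
      by (simp add: o_def)
    have c2: "continuous_map (prod_topology ?PT ?PT) (tau H TH) (\<lambda>z. snd (fst z) \<otimes>\<^bsub>H\<^esub> snd (snd z))"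
      using continuous_map_compose[OF continuous_map_pairedI[OF sfst ssnd] tg_mult[OF H.tau_tg]]
      by (simp add: o_def)
    have mc: "continuous_map (prod_topology ?PT ?PT) ?PT (\<lambda>(x, y). x \<otimes>\<^bsub>G \<times>\<times> H\<^esub> y)"
      by (rule continuous_map_eq[OF continuous_map_pairedI[OF c1 c2]]) (auto simp: mult_DirProd')
    have ic0: "continuous_map ?PT ?PT (\<lambda>(x, y). (inv\<^bsub>G\<^esub> x, inv\<^bsub>H\<^esub> y))"
      by (rule continuous_map_prod_top[THEN iffD2]) (use tg_inv[OF G.tau_tg] tg_inv[OF H.tau_tg] in blast)
    have ic: "continuous_map ?PT ?PT (m_inv (G \<times>\<times> H))"
      by (rule continuous_map_eq[OF ic0]) (auto simp: G.tau_topspace H.tau_topspace inv_DirProd[OF G.grp H.grp])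
    have PTtg: "topological_group (G \<times>\<times> H) ?PT"
      using mc ic tsPT by (simp add: topological_group_def group_with_topology_def DirProd_group G.grp H.grp)
    have cG: "continuous_map TG (tau G TG) (\<lambda>x. x)"
      by (rule coarser_cont) (auto simp: G.tau_topspace G.tsT G.tau_coarser)
    have cH: "continuous_map TH (tau H TH) (\<lambda>x. x)"
      by (rule coarser_cont) (auto simp: H.tau_topspace H.tsT H.tau_coarser)
    have cGH0: "continuous_map (prod_topology TG TH) ?PT (\<lambda>(x, y). (x, y))"
      by (rule continuous_map_prod_top[THEN iffD2]) (use cG cH in blast)
    have cGH: "continuous_map (prod_topology TG TH) ?PT (\<lambda>x. x)"
      by (rule continuous_map_eq[OF cGH0]) auto
    have coarse: "openin (prod_topology TG TH) U" if "openin ?PT U" for U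
      by (rule cont_coarser[OF cGH _ that]) (simp add: G.tau_topspace H.tau_topspace G.tsT H.tsT)
    have sub1: "openin (tau (G \<times>\<times> H) (prod_topology TG TH)) U" if "openin ?PT U" for U
      by (rule GH.tau_finest[OF PTtg coarse that])
    have h1: "(\<lambda>g. (g, \<one>\<^bsub>H\<^esub>)) \<in> hom G (G \<times>\<times> H)"
      by (rule homI) auto
    have h2: "(\<lambda>h. (\<one>\<^bsub>G\<^esub>, h)) \<in> hom H (G \<times>\<times> H)"
      by (rule homI) auto
    have k1: "continuous_map TG (prod_topology TG TH) (\<lambda>g. (g, \<one>\<^bsub>H\<^esub>))"
      by (rule continuous_map_pairedI[OF cont_ident]) (simp add: H.tsT)
    have k2: "continuous_map TH (prod_topology TG TH) (\<lambda>h. (\<one>\<^bsub>G\<^esub>, h))"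
      by (rule continuous_map_pairedI[OF _ cont_ident]) (simp add: G.tsT)
    have t1: "continuous_map (tau G TG) (tau (G \<times>\<times> H) (prod_topology TG TH)) (\<lambda>g. (g, \<one>\<^bsub>H\<^esub>))"
      by (rule tau_func[OF assms(1) gwtGH h1 k1])
    have t2: "continuous_map (tau H TH) (tau (G \<times>\<times> H) (prod_topology TG TH)) (\<lambda>h. (\<one>\<^bsub>G\<^esub>, h))"
      by (rule tau_func[OF assms(2) gwtGH h2 k2])
    have t1': "continuous_map ?PT (tau (G \<times>\<times> H) (prod_topology TG TH)) (\<lambda>z. (fst z, \<one>\<^bsub>H\<^esub>))"
      using continuous_map_compose[OF continuous_map_fst t1] by (simp add: o_def)
    have t2': "continuous_map ?PT (tau (G \<times>\<times> H) (prod_topology TG TH)) (\<lambda>z. (\<one>\<^bsub>G\<^esub>, snd z))"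
      using continuous_map_compose[OF continuous_map_snd t2] by (simp add: o_def)
    have t3: "continuous_map ?PT (tau (G \<times>\<times> H) (prod_topology TG TH))
               (\<lambda>z. (fst z, \<one>\<^bsub>H\<^esub>) \<otimes>\<^bsub>G \<times>\<times> H\<^esub> (\<one>\<^bsub>G\<^esub>, snd z))"
      using continuous_map_compose[OF continuous_map_pairedI[OF t1' t2'] tg_mult[OF GH.tau_tg]]
      by (simp add: o_def)
    have t4: "continuous_map ?PT (tau (G \<times>\<times> H) (prod_topology TG TH)) (\<lambda>z. z)"
      by (rule continuous_map_eq[OF t3]) (auto simp: G.tau_topspace H.tau_topspace)
    have sub2: "openin ?PT U" if "openin (tau (G \<times>\<times> H) (prod_topology TG TH)) U" for U
      by (rule cont_coarser[OF t4 _ that]) (simp add: G.tau_topspace H.tau_topspace GH.tau_topspace)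
    show ?thesis unfolding topology_eq using sub1 sub2 by blast
  qed
  show ?thesis using P1 P2 P3[OF assms(1)] P4 by blast
qed

end
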